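(* Let $c\in[0,1)$, $b(c)=\tfrac12-c$, $f_c(x)=\log|\cos\pi(x+c)|$. If $\chi_-(f_c,T(b(c)))=-\infty$, then $\alpha(c):=\inf_{\mu\in\mathcal M_T}\int f_c\,d\mu=-\infty$.
   Context: $\mathbb T=\mathbb R/\mathbb Z$, $Tx=2x\bmod1$, $\mathcal M_T$ the set of $T$-invariant Borel probability measures. For $x\in\mathbb T$, $\chi_-(f_c,x)=\liminf_{n\to\infty}\frac1n\sum_{i=0}^{n-1}f_c(T^ix)$ and $\chi_+(f_c,x)$ is the corresponding limsup. Convention $\log0=-\infty$. *)

theory Defs
  imports "HOL-Probability.Probability"
begin

text \<open>The circle R/Z is represented by the interval [0,1) of reals (with its Borel sets);
  functions on R/Z are 1-periodic functions on R.\<close>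

definition Tmap :: "real \<Rightarrow> real" where
  "Tmap x = frac (2 * x)"

definition fc :: "real \<Rightarrow> real \<Rightarrow> ereal" where
  "fc c x = (if cos (pi * (x + c)) = 0 then -\<infinity> else ereal (ln \<bar>cos (pi * (x + c))\<bar>))"

definition bc :: "real \<Rightarrow> real" where
  "bc c = 1/2 - c"

definition MT :: "real measure set" where
  "MT = {\<mu>. sets \<mu> = sets (restrict_space borel {0..<1}) \<and> prob_space \<mu> \<and>
            (\<forall>A\<in>sets \<mu>. emeasure \<mu> (Tmap -` A \<inter> space \<mu>) = emeasure \<mu> A)}"

text \<open>Integral of f_c (a function bounded above by 0) with values in [-infinity,0].\<close>
definition int_fc :: "real \<Rightarrow> real measure \<Rightarrow> ereal" where
  "int_fc c \<mu> = - enn2ereal (\<integral>\<^sup>+ x. e2ennreal (- fc c x) \<partial>\<mu>)"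

definition alpha :: "real \<Rightarrow> ereal" where
  "alpha c = Inf (int_fc c ` MT)"

definition chi_minus :: "(real \<Rightarrow> ereal) \<Rightarrow> real \<Rightarrow> ereal" where
  "chi_minus f x = liminf (\<lambda>n. ereal (1 / real n) * (\<Sum>i<n. f ((Tmap ^^ i) x)))"

end

theory Submission
  imports Defs
begin


definition gs :: "real \<Rightarrow> real" where "gs t = \<bar>sin (pi * t)\<bar>"

lemma cos_gs: "\<bar>cos (pi * (x + c))\<bar> = gs (x - bc c)"
proof -
  have "pi * (x + c) = pi * (x - bc c) + pi/2" by (simp add: bc_def algebra_simps)
  then show ?thesis by (simp add: gs_def cos_add)
qed

lemma gs_int: "gs (t + of_int k) = gs t"
proof -
  have s: "sin (of_int k * pi) = 0" by (simp add: sin_times_pi_eq_0)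
  have "(sin (of_int k * pi))^2 + (cos (of_int k * pi))^2 = 1" by simp
  then have "\<bar>cos (of_int k * pi)\<bar> = 1" using s by (auto simp add: power2_eq_1_iff) 
  then show ?thesis unfolding gs_def by (simp add: distrib_left sin_add s abs_mult mult.commute)
qed

lemma gs_frac: "gs (frac z - b) = gs (z - b)"
proof -
  have "frac z - b = (z - b) + of_int (- \<lfloor>z\<rfloor>)" by (simp add: frac_def)
  then show ?thesis by (metis gs_int diff_conv_add_uminus frac_def)
qed

lemma gs_lip: "\<bar>gs u - gs v\<bar> \<le> pi * \<bar>u - v\<bar>"
proof -
  have "\<bar>sin (pi * u) - sin (pi * v)\<bar> = 2 * (\<bar>sin ((pi * u - pi * v)/2)\<bar>) * (\<bar>cos ((pi * u + pi * v)/2)\<bar>)"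
    by (simp add: sin_diff_sin abs_mult)
  also have "\<dots> \<le> 2 * (\<bar>(pi * u - pi * v)/2\<bar>) * 1"
    by (intro mult_mono abs_sin_x_le_abs_x) auto
  also have "\<dots> = pi * \<bar>u - v\<bar>" by (simp add: abs_mult right_diff_distrib[symmetric])
  finally show ?thesis unfolding gs_def by linarith
qed

lemma gs_even: "gs (- t) = gs t" by (simp add: gs_def)

lemma gs_mono: "0 \<le> u \<Longrightarrow> u \<le> v \<Longrightarrow> v \<le> 1/2 \<Longrightarrow> gs u \<le> gs v"
proof -
  assume h: "0 \<le> u" "u \<le> v" "v \<le> 1/2"
  have a: "0 \<le> pi * u" using h by simp
  have b: "pi * u \<le> pi * v" using h by (simp add: mult_left_mono)
  have c: "pi * v \<le> pi / 2" using h mult_left_mono[of v "1/2" pi] by simp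
  have d: "-(pi/2) \<le> pi * u" using a pi_gt_zero by linarith
  have "sin (pi * u) \<le> sin (pi * v)" by (rule sin_monotone_2pi_le) (use d b c in auto)
  moreover have "0 \<le> sin (pi * u)" by (rule sin_ge_zero) (use a b c in auto)
  ultimately show ?thesis unfolding gs_def by simp
qed

lemma frac2: "frac (2 * frac z) = frac (2 * z)"
proof -
  have "2 * frac z = 2 * z + of_int (- 2 * \<lfloor>z\<rfloor>)" by (simp add: frac_def algebra_simps)
  then show ?thesis by (metis frac_add_of_int_right)
qed

lemma Tmap_iter_Suc: "(Tmap ^^ Suc i) x = frac (2^Suc i * x)"
proof (induction i)
  case 0 then show ?case by (simp add: Tmap_def)
next
  case (Suc i)
  have "(Tmap ^^ Suc (Suc i)) x = Tmap ((Tmap ^^ Suc i) x)" by simp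
  also have "\<dots> = frac (2 * frac (2^Suc i * x))" by (simp only: Suc.IH Tmap_def)
  also have "\<dots> = frac (2^Suc (Suc i) * x)" by (simp add: frac2 mult.assoc)
  finally show ?case .
qed

lemma Tmap_iter: "0 \<le> x \<Longrightarrow> x < 1 \<Longrightarrow> (Tmap ^^ i) x = frac (2^i * x)"
proof (cases i)
  case 0 then show "0 \<le> x \<Longrightarrow> x < 1 \<Longrightarrow> ?thesis" by (simp add: frac_eq)
next
  case (Suc j) then show ?thesis by (metis Tmap_iter_Suc)
qed

lemma fc_le: "gs (x - bc c) \<le> t \<Longrightarrow> 0 < t \<Longrightarrow> fc c x \<le> ereal (ln t)"
  unfolding fc_def using cos_gs[of x c] by auto

lemma fc_eq: "0 < gs (x - bc c) \<Longrightarrow> fc c x = ereal (ln (gs (x - bc c)))"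
  unfolding fc_def using cos_gs[of x c] by auto

lemma fc_nonpos: "fc c x \<le> 0"
  unfolding fc_def by auto

lemma fc_meas: "fc c \<in> borel_measurable borel"
  unfolding fc_def by measurable

lemma Tmap_meas: "Tmap \<in> borel_measurable borel"
  unfolding Tmap_def frac_def by measurable




lemma sum_e2ennreal:
  assumes "\<And>i. i \<in> I \<Longrightarrow> (0::ereal) \<le> a i"
  shows "enn2ereal (\<Sum>i\<in>I. e2ennreal (a i)) = (\<Sum>i\<in>I. a i)"
proof -
  have "(\<Sum>i\<in>I. a i) = (\<Sum>i\<in>I. enn2ereal (e2ennreal (a i)))"
    using assms by (intro sum.cong) (auto simp: enn2ereal_e2ennreal)
  also have "\<dots> = enn2ereal (\<Sum>i\<in>I. e2ennreal (a i))" by (rule sum_enn2ereal) simp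
  finally show ?thesis by simp
qed

lemma periodic_MT:
  assumes n: "0 < n" and per: "(Tmap ^^ n) p = p" and p: "0 \<le> p" "p < 1"
    and R: "0 \<le> R" and S: "ereal (R * n) \<le> (\<Sum>i<n. - fc c ((Tmap ^^ i) p))"
  shows "\<exists>\<mu>\<in>MT. int_fc c \<mu> \<le> ereal (- R)"
proof -
  define U where "U = uniform_count_measure {..<n}"
  define B where "B = restrict_space borel {0..<1::real}"
  define \<phi> where "\<phi> = (\<lambda>i. (Tmap ^^ i) p)"
  define \<mu> where "\<mu> = distr U B \<phi>"
  have phi01: "\<phi> i \<in> {0..<1}" for i
    using p by (auto simp: \<phi>_def Tmap_iter frac_lt_1)
  have phimeas: "\<phi> \<in> U \<rightarrow>\<^sub>M B"
    unfolding U_def B_def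
    by (rule measurable_restrict_space2) (use phi01 in \<open>auto simp: measurable_cong_sets[OF sets_uniform_count_measure_count_space refl]\<close>)
  have TB: "Tmap \<in> B \<rightarrow>\<^sub>M B"
    unfolding B_def
    apply (rule measurable_restrict_space2)
     apply (simp add: Tmap_def frac_lt_1)
    apply (rule measurable_restrict_space1)
    by (rule Tmap_meas)
  have spB: "space B = {0..<1}" by (simp add: B_def)
  have sets_mu: "sets \<mu> = sets B" by (simp add: \<mu>_def)
  have space_mu: "space \<mu> = {0..<1}" by (simp add: \<mu>_def spB)
  have ps: "prob_space \<mu>"
    unfolding \<mu>_def
  proof (rule prob_space.prob_space_distr[OF _ phimeas])
    show "prob_space U" unfolding U_def
      by (rule prob_space_uniform_count_measure) (use n in auto)
  qed
  have card_shift: "card {i\<in>{..<n}. \<phi> (Suc i) \<in> A} = card {i\<in>{..<n}. \<phi> i \<in> A}" for A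
  proof -
    define f where "f i = (if \<phi> i \<in> A then 1 else 0::nat)" for i
    have fn: "f n = f 0" using per by (simp add: f_def \<phi>_def)
    have "(\<Sum>i<Suc n. f i) = f 0 + (\<Sum>i<n. f (Suc i))" by (rule sum.lessThan_Suc_shift)
    moreover have "(\<Sum>i<Suc n. f i) = (\<Sum>i<n. f i) + f n" by simp
    ultimately have "(\<Sum>i<n. f (Suc i)) = (\<Sum>i<n. f i)" using fn by simp
    moreover have "card {i\<in>{..<n}. P i} = (\<Sum>i<n. if P i then 1 else 0)" for P :: "nat \<Rightarrow> bool"
      by (simp only: card_eq_sum sum.inter_filter[OF finite_lessThan])
    ultimately show ?thesis unfolding f_def by presburger
  qed
  have inv: "emeasure \<mu> (Tmap -` A \<inter> space \<mu>) = emeasure \<mu> A" if A: "A \<in> sets \<mu>" for A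
  proof -
    have A': "A \<in> sets B" using A sets_mu by simp
    have pre: "Tmap -` A \<inter> space \<mu> \<in> sets B"
      using measurable_sets[OF TB A'] by (simp add: space_mu spB)
    have "emeasure \<mu> (Tmap -` A \<inter> space \<mu>) = emeasure U (\<phi> -` (Tmap -` A \<inter> space \<mu>) \<inter> space U)"
      unfolding \<mu>_def by (rule emeasure_distr[OF phimeas pre[unfolded \<mu>_def]])
    also have "\<phi> -` (Tmap -` A \<inter> space \<mu>) \<inter> space U = {i\<in>{..<n}. \<phi> (Suc i) \<in> A}"
      using phi01 by (auto simp: U_def space_uniform_count_measure space_mu \<phi>_def)
    also have "emeasure U {i\<in>{..<n}. \<phi> (Suc i) \<in> A} = emeasure U {i\<in>{..<n}. \<phi> i \<in> A}"
      unfolding U_def using card_shift[of A] by (subst (1 2) emeasure_uniform_count_measure) auto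
    also have "{i\<in>{..<n}. \<phi> i \<in> A} = \<phi> -` A \<inter> space U"
      by (auto simp: U_def space_uniform_count_measure)
    also have "emeasure U (\<phi> -` A \<inter> space U) = emeasure \<mu> A"
      unfolding \<mu>_def by (rule emeasure_distr[OF phimeas A', symmetric])
    finally show ?thesis .
  qed
  have muMT: "\<mu> \<in> MT"
    unfolding MT_def using sets_mu ps inv by (auto simp: B_def)
  have gmeas: "(\<lambda>x. e2ennreal (- fc c x)) \<in> borel_measurable B"
  proof -
    have e: "(\<lambda>x::ereal. e2ennreal (- x)) \<in> borel_measurable borel" by measurable
    show ?thesis unfolding B_def
      by (rule measurable_restrict_space1) (rule measurable_compose[OF fc_meas e])
  qed
  have "(\<integral>\<^sup>+ x. e2ennreal (- fc c x) \<partial>\<mu>) = (\<integral>\<^sup>+ i. e2ennreal (- fc c (\<phi> i)) \<partial>U)"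
    unfolding \<mu>_def by (rule nn_integral_distr[OF phimeas]) (simp add: gmeas)
  also have "\<dots> = (\<Sum>i<n. ennreal (1 / real n) * e2ennreal (- fc c (\<phi> i)))"
    unfolding U_def uniform_count_measure_def by (subst nn_integral_point_measure_finite) simp_all
  also have "\<dots> = ennreal (1 / real n) * (\<Sum>i<n. e2ennreal (- fc c (\<phi> i)))"
    by (simp add: sum_distrib_left)
  finally have I: "(\<integral>\<^sup>+ x. e2ennreal (- fc c x) \<partial>\<mu>) = ennreal (1 / real n) * (\<Sum>i<n. e2ennreal (- fc c (\<phi> i)))" .
  have "enn2ereal (\<Sum>i<n. e2ennreal (- fc c (\<phi> i))) = (\<Sum>i<n. - fc c (\<phi> i))"
    by (rule sum_e2ennreal) (simp add: fc_nonpos)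
  then have "ereal (R * n) \<le> enn2ereal (\<Sum>i<n. e2ennreal (- fc c (\<phi> i)))"
    using S by (simp add: \<phi>_def)
  then have "e2ennreal (ereal (R * n)) \<le> (\<Sum>i<n. e2ennreal (- fc c (\<phi> i)))"
    by (metis e2ennreal_enn2ereal e2ennreal_mono)
  then have "ennreal (R * n) \<le> (\<Sum>i<n. e2ennreal (- fc c (\<phi> i)))" by simp
  then have "ennreal (1 / real n) * ennreal (R * n) \<le> (\<integral>\<^sup>+ x. e2ennreal (- fc c x) \<partial>\<mu>)"
    unfolding I by (rule mult_left_mono) simp
  moreover have "ennreal (1 / real n) * ennreal (R * n) = ennreal R"
    using n R by (simp add: ennreal_mult[symmetric])
  ultimately have "ennreal R \<le> (\<integral>\<^sup>+ x. e2ennreal (- fc c x) \<partial>\<mu>)" by simp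
  then have "ereal R \<le> enn2ereal (\<integral>\<^sup>+ x. e2ennreal (- fc c x) \<partial>\<mu>)"
    using R by (metis enn2ereal_ennreal less_eq_ennreal.rep_eq)
  then have "int_fc c \<mu> \<le> ereal (- R)"
    unfolding int_fc_def by (metis ereal_minus_le_minus uminus_ereal.simps(1))
  then show ?thesis using muMT by blast
qed




lemma frac_pow2: "frac (2^k * frac z) = frac (2^k * z)"
proof -
  have "2^k * frac z = 2^k * z + of_int (- (2^k * \<lfloor>z\<rfloor>))" by (simp add: frac_def algebra_simps)
  then show ?thesis by (metis frac_add_of_int_right)
qed

lemma gs_abs: "gs \<bar>t\<bar> = gs t"
  by (cases "t \<ge> 0") (auto simp: gs_even)

lemma periodic_pt:
  fixes m :: int and q :: nat
  assumes "0 < q"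
  defines "p \<equiv> frac (m / (2^q - 1))"
  shows "(Tmap ^^ q) p = p" "0 \<le> p" "p < 1" "\<And>i. (Tmap ^^ i) p = frac (2^i * (m / (2^q - 1)))"
proof -
  show p0: "0 \<le> p" "p < 1" by (auto simp: p_def frac_lt_1)
  show it: "\<And>i. (Tmap ^^ i) p = frac (2^i * (m / (2^q - 1)))"
    using p0 by (simp add: Tmap_iter p_def frac_pow2)
  have D: "(2::real)^q - 1 \<noteq> 0"
    using assms by (metis one_less_power one_less_numeral_iff semiring_norm(76) less_irrefl right_minus_eq)
  have "2^q * (m / (2^q - 1)) = m / (2^q - 1) + of_int m"
    using D by (simp add: field_simps)
  then show "(Tmap ^^ q) p = p" using it[of q] by (simp add: p_def)
qed

lemma extract_N:
  assumes "chi_minus f y = -\<infinity>"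
  shows "\<exists>N\<ge>1. (\<Sum>i<N. f ((Tmap ^^ i) y)) \<le> ereal (- M * N)"
proof (rule ccontr)
  define X where "X n = ereal (1 / real n) * (\<Sum>i<n. f ((Tmap ^^ i) y))" for n
  assume "\<not> ?thesis"
  then have h: "\<And>N. N \<ge> 1 \<Longrightarrow> ereal (- M * N) < (\<Sum>i<N. f ((Tmap ^^ i) y))" by (meson not_le)
  have "ereal (- M) \<le> X N" if "N \<ge> 1" for N
  proof -
    have lt: "ereal (- M * N) < (\<Sum>i<N. f ((Tmap ^^ i) y))" using h that by blast
    show ?thesis
    proof (cases "(\<Sum>i<N. f ((Tmap ^^ i) y))")
      case (real r)
      then have "- M * N < r" using lt by simp
      then have "- M \<le> r / N" using that by (simp add: field_simps)
      then show ?thesis using real by (simp add: X_def)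
    next
      case PInf then show ?thesis using that by (simp add: X_def)
    next
      case MInf then show ?thesis using lt by simp
    qed
  qed
  then have "eventually (\<lambda>n. ereal (- M) \<le> X n) sequentially"
    by (auto simp: eventually_sequentially)
  then have "ereal (- M) \<le> liminf X" by (rule Liminf_bounded)
  moreover have "liminf X = -\<infinity>" using assms unfolding chi_minus_def X_def[abs_def] by simp
  ultimately show False by simp
qed




lemma Tmap_01: "0 \<le> Tmap x" "Tmap x < 1"
  by (auto simp: Tmap_def frac_lt_1)

lemma main_K:
  assumes K: "1 \<le> K" and hyp: "chi_minus (fc c) (Tmap (bc c)) = -\<infinity>"
  shows "\<exists>\<mu>\<in>MT. int_fc c \<mu> \<le> ereal (- K)"
proof -
  define b where "b = bc c"
  define y where "y = Tmap b"
  have y01: "0 \<le> y" "y < 1" by (auto simp: y_def Tmap_01)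
  define L where "L = nat \<lceil>(K + ln pi) / ln 2\<rceil>"
  have L: "K + ln pi \<le> L * ln 2"
  proof -
    have "(K + ln pi) / ln 2 \<le> L" unfolding L_def by (rule real_nat_ceiling_ge)
    then show ?thesis by (simp add: divide_le_eq)
  qed
  define M where "M = K * (L + 1) + ln 2"
  obtain N :: nat where N1: "N \<ge> 1" and SN: "(\<Sum>i<N. fc c ((Tmap ^^ i) y)) \<le> ereal (- M * N)"
    using extract_N[OF hyp[folded b_def, folded y_def], of M] by blast
  define \<epsilon> where "\<epsilon> = exp (- K * N)"
  have eps: "0 < \<epsilon>" by (simp add: \<epsilon>_def)
  have yi: "(Tmap ^^ i) y = frac (2^Suc i * b)" for i
    unfolding y_def by (metis Tmap_iter_Suc funpow_Suc_right o_apply)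
  have si: "gs ((Tmap ^^ i) y - b) = gs (2^Suc i * b - b)" for i
    by (simp add: yi gs_frac)
  show ?thesis
  proof (cases "\<exists>i<N. gs (2^Suc i * b - b) \<le> \<epsilon>")
    case True
    then obtain i where iN: "i < N" and small: "gs (2^Suc i * b - b) \<le> \<epsilon>" by blast
    define q where "q = Suc i"
    define D where "D = (2::real)^q - 1"
    have D1: "1 \<le> D"
    proof -
      have "(2::real)^1 \<le> 2^q" unfolding q_def by (rule power_increasing) auto
      then show ?thesis by (simp add: D_def)
    qed
    define m where "m = round (D * b)"
    define \<delta> where "\<delta> = D * b - m"
    have d: "\<bar>\<delta>\<bar> \<le> 1/2" unfolding \<delta>_def m_def using of_int_round_abs_le[of "D * b"] by linarith
    define p where "p = frac (m / (2^q - 1))"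
    have pp: "(Tmap ^^ q) p = p" "0 \<le> p" "p < 1"
      using periodic_pt[where q=q and m=m] by (auto simp: p_def q_def)
    have "gs (p - b) = gs (m / D - b)" by (simp add: p_def D_def gs_frac)
    also have "m / D - b = - (\<delta> / D)" using D1 by (simp add: \<delta>_def field_simps)
    also have "gs (- (\<delta> / D)) = gs (\<bar>\<delta>\<bar> / D)"
    proof -
      have "gs (- (\<delta> / D)) = gs \<bar>\<delta> / D\<bar>" by (simp only: gs_even gs_abs)
      also have "\<bar>\<delta> / D\<bar> = \<bar>\<delta>\<bar> / D" using D1 by simp
      finally show ?thesis .
    qed
    also have "\<dots> \<le> gs \<bar>\<delta>\<bar>"
    proof (rule gs_mono)
      have "\<bar>\<delta>\<bar> * 1 \<le> \<bar>\<delta>\<bar> * D" by (rule mult_left_mono) (use D1 in auto)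
      then show "\<bar>\<delta>\<bar> / D \<le> \<bar>\<delta>\<bar>" using D1 by (simp add: pos_divide_le_eq)
      show "0 \<le> \<bar>\<delta>\<bar> / D" using D1 by simp
      show "\<bar>\<delta>\<bar> \<le> 1/2" by (rule d)
    qed
    also have "\<dots> = gs (D * b + of_int (- m))" by (simp add: gs_abs \<delta>_def)
    also have "\<dots> = gs (D * b)" by (rule gs_int)
    also have "D * b = 2^Suc i * b - b" by (simp add: D_def q_def algebra_simps)
    finally have gp: "gs (p - b) \<le> \<epsilon>" using small by linarith
    have fp: "fc c p \<le> ereal (- K * N)"
      using fc_le[of p c \<epsilon>] gp eps by (simp add: b_def \<epsilon>_def)
    have "ereal (K * q) \<le> ereal (K * N)" using K iN by (simp add: q_def)
    also have "\<dots> \<le> - fc c ((Tmap ^^ 0) p)"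
    proof -
      have "- ereal (- K * N) \<le> - fc c p" using fp by (simp only: ereal_minus_le_minus)
      then show ?thesis by simp
    qed
    also have "\<dots> \<le> (\<Sum>j<q. - fc c ((Tmap ^^ j) p))"
    proof -
      have "(\<Sum>j\<in>{0}. - fc c ((Tmap ^^ j) p)) \<le> (\<Sum>j<q. - fc c ((Tmap ^^ j) p))"
        by (rule sum_mono2) (simp_all add: q_def fc_nonpos)
      then show ?thesis by simp
    qed
    finally have S: "ereal (K * q) \<le> (\<Sum>j<q. - fc c ((Tmap ^^ j) p))" .
    show ?thesis
      by (rule periodic_MT[OF _ pp(1) pp(2) pp(3) _ S]) (use K in \<open>auto simp: q_def\<close>)
  next
    case False
    then have big: "\<And>i. i < N \<Longrightarrow> \<epsilon> < gs (2^Suc i * b - b)" by (meson not_le)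
    define n where "n = (L + 1) * N"
    have n0: "0 < n" using N1 by (simp add: n_def)
    have Nn: "N \<le> n" by (simp add: n_def)
    define m where "m = \<lfloor>2^n * y\<rfloor>"
    define p' where "p' = m / (2^n - 1)"
    define p where "p = frac p'"
    have pp: "(Tmap ^^ n) p = p" "0 \<le> p" "p < 1" "\<And>i. (Tmap ^^ i) p = frac (2^i * p')"
      using periodic_pt[OF n0, where m=m] by (auto simp: p_def p'_def)
    have close: "\<bar>p' - y\<bar> \<le> 1 / 2^n"
    proof -
      have A: "(2::real)^1 \<le> 2^n" by (rule power_increasing) (use n0 in auto)
      have m0: "0 \<le> m" unfolding m_def using y01 by simp
      have "2^n * y < 2^n * 1" using y01 by (intro mult_strict_left_mono) auto
      then have "2^n * y < of_int (2^n)" by simp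
      then have "m < 2^n" unfolding m_def by (simp only: floor_less_iff)
      then have "m \<le> 2^n - 1" by simp
      then have mA: "real_of_int m \<le> 2^n - 1"
      proof -
        have "real_of_int m \<le> real_of_int (2^n - 1)" using \<open>m \<le> 2^n - 1\<close> by (simp only: of_int_le_iff)
        then show ?thesis by simp
      qed
      have t1: "real_of_int m \<le> 2^n * y" "2^n * y < real_of_int m + 1" unfolding m_def
        by (simp_all add: of_int_floor_le real_of_int_floor_add_one_gt)
      have D1: "1 \<le> (2::real)^n - 1" using A by simp
      have q1: "0 \<le> m / (2^n - 1)" using m0 D1 by simp
      have q2: "m / (2^n - 1) \<le> 1" using mA D1 by simp
      have gen: "(X + 1) * (Y / X) = Y + Y / X" if "X \<noteq> 0" for X Y :: real
        using that by (simp add: field_simps)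
      have e: "2^n * p' = m + m / (2^n - 1)"
        using gen[of "2^n - 1" "real_of_int m"] D1 unfolding p'_def by simp
      have f: "2^n * (p' - y) = 2^n * p' - 2^n * y" by (simp add: right_diff_distrib)
      have "\<bar>2^n * (p' - y)\<bar> \<le> 1"
        unfolding abs_le_iff f e using t1 q1 q2 by linarith
      then have "\<bar>p' - y\<bar> * 2^n \<le> 1" by (simp add: abs_mult mult.commute)
      then show ?thesis by (simp add: pos_le_divide_eq)
    qed
    have small2: "pi * 2^N / 2^n \<le> \<epsilon>"
    proof -
      have lnpi: "0 \<le> ln pi" using pi_ge_two by simp
      have "K * N + ln pi \<le> N * (K + ln pi)"
        using N1 lnpi by (simp add: algebra_simps mult_le_cancel_right1)
      also have "\<dots> \<le> N * (L * ln 2)" using L N1 by (intro mult_left_mono) auto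
      finally have "K * N + ln pi \<le> real (L * N) * ln 2" by (simp add: algebra_simps)
      then have "exp (K * N + ln pi) \<le> exp (real (L * N) * ln 2)" by simp
      moreover have "exp (real (L * N) * ln 2) = 2 ^ (L * N)" by (subst exp_of_nat_mult) simp
      ultimately have "exp (K * N) * pi \<le> 2 ^ (L * N)" by (simp add: exp_add)
      moreover have "(2::real) ^ n = 2^N * 2^(L * N)" by (simp add: n_def power_add algebra_simps)
      ultimately have "pi * 2^N \<le> exp (- K * N) * 2^n"
        by (simp add: exp_minus field_simps)
      then show ?thesis unfolding \<epsilon>_def by (simp add: pos_divide_le_eq)
    qed
    have ti: "gs ((Tmap ^^ i) p - b) < 2 * gs ((Tmap ^^ i) y - b)" if iN: "i < N" for i
    proof -
      have a: "gs ((Tmap ^^ i) p - b) = gs (2^i * p' - b)" by (simp add: pp(4) gs_frac)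
      have b': "gs ((Tmap ^^ i) y - b) = gs (2^i * y - b)" by (simp add: Tmap_iter[OF y01] gs_frac)
      have "\<bar>gs (2^i * p' - b) - gs (2^i * y - b)\<bar> \<le> pi * \<bar>(2^i * p' - b) - (2^i * y - b)\<bar>"
        by (rule gs_lip)
      also have "\<bar>(2^i * p' - b) - (2^i * y - b)\<bar> = 2^i * \<bar>p' - y\<bar>"
        by (simp add: right_diff_distrib[symmetric] abs_mult)
      also have "pi * (2^i * \<bar>p' - y\<bar>) \<le> pi * (2^N * (1 / 2^n))"
      proof -
        have "(2::real)^i \<le> 2^N" by (rule power_increasing) (use iN in auto)
        then have "2^i * \<bar>p' - y\<bar> \<le> 2^N * (1 / 2^n)"
          using close by (intro mult_mono) auto
        then show ?thesis by (rule mult_left_mono) simp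
      qed
      also have "\<dots> \<le> \<epsilon>" using small2 by simp
      finally have "gs (2^i * p' - b) \<le> gs (2^i * y - b) + \<epsilon>" by linarith
      moreover have "\<epsilon> < gs ((Tmap ^^ i) y - b)" using big[OF iN] si by simp
      ultimately show ?thesis using a b' by linarith
    qed
    have gpos: "0 < gs ((Tmap ^^ i) y - b)" if "i < N" for i
      using big[OF that] si[of i] eps by linarith
    have fy: "fc c ((Tmap ^^ i) y) = ereal (ln (gs ((Tmap ^^ i) y - b)))" if "i < N" for i
      using fc_eq gpos[OF that] by (simp add: b_def)
    have fp: "ereal (- ln 2 - ln (gs ((Tmap ^^ i) y - b))) \<le> - fc c ((Tmap ^^ i) p)" if "i < N" for i
    proof -
      have "fc c ((Tmap ^^ i) p) \<le> ereal (ln (2 * gs ((Tmap ^^ i) y - b)))"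
        using fc_le[of "(Tmap ^^ i) p" c] ti[OF that] gpos[OF that] by (simp add: b_def)
      also have "ln (2 * gs ((Tmap ^^ i) y - b)) = ln 2 + ln (gs ((Tmap ^^ i) y - b))"
        using gpos[OF that] by (simp add: ln_mult)
      finally have "- ereal (ln 2 + ln (gs ((Tmap ^^ i) y - b))) \<le> - fc c ((Tmap ^^ i) p)"
        by (simp only: ereal_minus_le_minus)
      then show ?thesis by simp
    qed
    have sumy: "(\<Sum>i<N. ln (gs ((Tmap ^^ i) y - b))) \<le> - M * N"
    proof -
      have "ereal (\<Sum>i<N. ln (gs ((Tmap ^^ i) y - b))) = (\<Sum>i<N. fc c ((Tmap ^^ i) y))"
        by (simp add: fy)
      then show ?thesis using SN by (metis ereal_less_eq(3))
    qed
    have "ereal (K * n) \<le> ereal (\<Sum>i<N. - ln 2 - ln (gs ((Tmap ^^ i) y - b)))"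
      using sumy by (simp add: sum_subtractf n_def M_def algebra_simps)
    also have "\<dots> = (\<Sum>i<N. ereal (- ln 2 - ln (gs ((Tmap ^^ i) y - b))))" by simp
    also have "\<dots> \<le> (\<Sum>i<N. - fc c ((Tmap ^^ i) p))" by (rule sum_mono) (simp add: fp)
    also have "\<dots> \<le> (\<Sum>i<n. - fc c ((Tmap ^^ i) p))"
      by (rule sum_mono2) (use Nn in \<open>simp_all add: fc_nonpos\<close>)
    finally have S: "ereal (K * n) \<le> (\<Sum>i<n. - fc c ((Tmap ^^ i) p))" .
    show ?thesis
      by (rule periodic_MT[OF n0 pp(1) pp(2) pp(3) _ S]) (use K in auto)
  qed
qed


theorem proposition2p2:
  fixes c :: real
  assumes "0 \<le> c" and "c < 1"
    and "chi_minus (fc c) (Tmap (bc c)) = -\<infinity>"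
  shows "alpha c = -\<infinity>"
proof -
  have "alpha c \<le> ereal B" for B
  proof -
    define K where "K = max 1 (- B)"
    have K1: "1 \<le> K" by (simp add: K_def)
    obtain \<mu> where mu: "\<mu> \<in> MT" "int_fc c \<mu> \<le> ereal (- K)"
      using main_K[OF K1 assms(3)] by blast
    have "alpha c \<le> int_fc c \<mu>" unfolding alpha_def using mu(1) by (rule INF_lower)
    also have "\<dots> \<le> ereal (- K)" by (rule mu(2))
    also have "\<dots> \<le> ereal B" by (simp add: K_def)
    finally show ?thesis .
  qed
  then show ?thesis by (rule ereal_bot)
qed

end
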